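(* Consider the NEAR-DGD$^t$ iteration $\mathbf{x}_k=\mathbf{Z}^t\mathbf{y}_k$, $\mathbf{y}_{k+1}=\mathbf{x}_k-\alpha\nabla\mathbf{f}(\mathbf{x}_k)$, $k=0,1,2,\ldots$, with fixed integer $t\ge1$, started from $y_{i,0}=s_0$ for all $i$ (a common point $s_0\in\mathbb{R}^p$). Suppose each $f_i$ is $\mu_i$-strongly convex with $L_i$-Lipschitz gradient, and let $0<\alpha<1/L$ with $L=\max_iL_i$. Then for all $k=1,2,\ldots$, $$\|\mathbf{x}_k\|\le D,\qquad \|\mathbf{y}_k\|\le D,\qquad D=\|\mathbf{y}_0-\mathbf{u}^\star\|+\frac{\nu+4}{\nu}\|\mathbf{u}^\star\|,$$ where $\mathbf{u}^\star=(u_1^\star;\ldots;u_n^\star)$ with $u_i^\star=\arg\min f_i$, $\nu=2\alpha\gamma$, $\gamma=\min_i\gamma_i$, $\gamma_i=\frac{\mu_iL_i}{\mu_i+L_i}$. The same bounds hold for the NEAR-DGD$^+$ iteration $\mathbf{x}_k=\mathbf{Z}^{t(k)}\mathbf{y}_k$, $\mathbf{y}_{k+1}=\mathbf{x}_k-\alpha\nabla\mathbf{f}(\mathbf{x}_k)$ for any sequence of positive integers $t(k)$.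
   Context: $n$ agents with functions $f_i:\mathbb{R}^p\to\mathbb{R}$. $\mathbf{W}$ is a symmetric doubly-stochastic $n\times n$ matrix of a connected network ($w_{ii}>0$, $w_{ij}>0$ iff $i,j$ neighbours), simple eigenvalue $1$, other eigenvalues in $(-1,1)$. $\mathbf{Z}=\mathbf{W}\otimes I_p$. Vectors in $\mathbb{R}^{np}$ are concatenations $\mathbf{x}=(x_1;\ldots;x_n)$, and $\nabla\mathbf{f}(\mathbf{x})=(\nabla f_1(x_1);\ldots;\nabla f_n(x_n))$. *)

theory Defs
  imports "HOL-Analysis.Analysis"
begin

text \<open>Agents are indexed by a finite type 'n; local variables live in a Euclidean
space 'a (playing the role of R^p). Stacked vectors in R^{np} are functions 'n => 'a.\<close>

definition snorm :: "('n::finite \<Rightarrow> 'a::real_normed_vector) \<Rightarrow> real" where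
  "snorm x = sqrt (\<Sum>i\<in>UNIV. (norm (x i))\<^sup>2)"

text \<open>The consensus operator Z = W (Kronecker) I_p acting on stacked vectors.\<close>
definition Zop :: "real^'n^'n \<Rightarrow> ('n::finite \<Rightarrow> 'a::real_vector) \<Rightarrow> ('n \<Rightarrow> 'a)" where
  "Zop W x = (\<lambda>i. \<Sum>j\<in>UNIV. (W $ i $ j) *\<^sub>R x j)"

definition Zpow :: "real^'n^'n \<Rightarrow> nat \<Rightarrow> ('n::finite \<Rightarrow> 'a::real_vector) \<Rightarrow> ('n \<Rightarrow> 'a)" where
  "Zpow W t = (Zop W ^^ t)"

definition mixing_matrix :: "real^'n^'n \<Rightarrow> bool" where
  "mixing_matrix W \<longleftrightarrow>
     (\<forall>i j. W $ i $ j = W $ j $ i) \<and>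
     (\<forall>i j. W $ i $ j \<ge> 0) \<and>
     (\<forall>i. (\<Sum>j\<in>UNIV. W $ i $ j) = 1) \<and>
     (\<forall>j. (\<Sum>i\<in>UNIV. W $ i $ j) = 1) \<and>
     (\<forall>i. W $ i $ i > 0) \<and>
     (\<forall>i j. (i, j) \<in> {(a, b). a \<noteq> b \<and> W $ a $ b > 0}\<^sup>*) \<and>
     (\<forall>v. W *v v = v \<longrightarrow> (\<forall>i j. v $ i = v $ j)) \<and>
     (\<forall>lam v. v \<noteq> 0 \<and> W *v v = lam *\<^sub>R v \<longrightarrow> lam = 1 \<or> (-1 < lam \<and> lam < 1))"

definition strongly_convex :: "real \<Rightarrow> ('a::real_inner \<Rightarrow> real) \<Rightarrow> bool" where
  "strongly_convex mu f \<longleftrightarrow> mu > 0 \<and> convex_on UNIV (\<lambda>x. f x - mu / 2 * (norm x)\<^sup>2)"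

definition lipschitz_grad :: "real \<Rightarrow> ('a::real_normed_vector \<Rightarrow> 'a) \<Rightarrow> bool" where
  "lipschitz_grad L g \<longleftrightarrow> L > 0 \<and> (\<forall>x y. norm (g x - g y) \<le> L * norm (x - y))"

end

theory Submission
  imports Defs
begin

lemma convex_grad_ineq:
  fixes h :: "'a::real_inner \<Rightarrow> real"
  assumes cv: "convex_on UNIV h" and dh: "GDERIV h x :> D"
  shows "h x + inner D (y - x) \<le> h y"
proof -
  define d where "d = y - x"
  define \<phi> where "\<phi> = (\<lambda>t::real. h (x + t *\<^sub>R d))"
  have cphi: "convex_on UNIV \<phi>"
  proof (rule convex_onI)
    fix t a b :: real assume t: "0 < t" "t < 1"
    have "x + ((1 - t) *\<^sub>R a + t *\<^sub>R b) *\<^sub>R d = (1 - t) *\<^sub>R (x + a *\<^sub>R d) + t *\<^sub>R (x + b *\<^sub>R d)"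
      by (simp add: algebra_simps)
    then show "\<phi> ((1 - t) *\<^sub>R a + t *\<^sub>R b) \<le> (1 - t) * \<phi> a + t * \<phi> b"
      unfolding \<phi>_def using convex_onD[OF cv, of t "x + a *\<^sub>R d" "x + b *\<^sub>R d"] t by simp
  qed auto
  have l: "((\<lambda>t::real. x + t *\<^sub>R d) has_derivative (\<lambda>t. t *\<^sub>R d)) (at 0)"
    by (auto intro!: derivative_eq_intros)
  have h0: "(h has_derivative (\<lambda>v. inner v D)) (at (x + 0 *\<^sub>R d))"
    using dh by (simp add: gderiv_def)
  have "(\<phi> has_derivative (\<lambda>t. inner (t *\<^sub>R d) D)) (at 0)"
    unfolding \<phi>_def using has_derivative_compose[OF l h0] by (simp add: o_def)
  moreover have "(\<lambda>t. inner (t *\<^sub>R d) D) = (*) (inner D d)" by (auto simp: fun_eq_iff inner_commute)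
  ultimately have "(\<phi> has_field_derivative (inner D d)) (at 0 within UNIV)"
    by (simp add: has_field_derivative_def)
  from convex_on_imp_above_tangent[OF cphi _ _ _ this, of 1]
  have "\<phi> 1 - \<phi> 0 \<ge> inner D d" by simp
  then show ?thesis by (simp add: \<phi>_def d_def)
qed

lemma descent:
  fixes f :: "'a::real_inner \<Rightarrow> real"
  assumes gr: "\<And>z. GDERIV f z :> g z"
    and lp: "\<And>a b. norm (g a - g b) \<le> L * norm (a - b)"
  shows "f y \<le> f x + inner (g x) (y - x) + L / 2 * (norm (y - x))\<^sup>2"
proof -
  define d where "d = y - x"
  define \<psi> where "\<psi> = (\<lambda>t::real. f (x + t *\<^sub>R d) - t * inner (g x) d - L / 2 * t\<^sup>2 * (norm d)\<^sup>2)"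
  have D: "DERIV \<psi> t :> inner (g (x + t *\<^sub>R d)) d - inner (g x) d - L * t * (norm d)\<^sup>2" for t
  proof -
    have l: "((\<lambda>t::real. x + t *\<^sub>R d) has_derivative (\<lambda>t. t *\<^sub>R d)) (at t)"
      by (auto intro!: derivative_eq_intros)
    have h0: "(f has_derivative (\<lambda>v. inner v (g (x + t *\<^sub>R d)))) (at (x + t *\<^sub>R d))"
      using gr by (simp add: gderiv_def)
    have "((\<lambda>t. f (x + t *\<^sub>R d)) has_derivative (\<lambda>s. inner (s *\<^sub>R d) (g (x + t *\<^sub>R d)))) (at t)"
      using has_derivative_compose[OF l h0] by (simp add: o_def)
    moreover have "(\<lambda>s. inner (s *\<^sub>R d) (g (x + t *\<^sub>R d))) = (*) (inner (g (x + t *\<^sub>R d)) d)"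
      by (auto simp: fun_eq_iff inner_commute)
    ultimately have a: "((\<lambda>t. f (x + t *\<^sub>R d)) has_field_derivative inner (g (x + t *\<^sub>R d)) d) (at t)"
      by (simp add: has_field_derivative_def)
    show ?thesis unfolding \<psi>_def
      by (rule derivative_eq_intros a refl | simp)+
  qed
  have "\<psi> 1 \<le> \<psi> 0"
  proof (rule DERIV_nonpos_imp_decreasing_open[of 0 1])
    fix t :: real assume t: "0 < t" "t < 1"
    have "inner (g (x + t *\<^sub>R d)) d - inner (g x) d = inner (g (x + t *\<^sub>R d) - g x) d"
      by (simp add: inner_diff_left)
    also have "\<dots> \<le> norm (g (x + t *\<^sub>R d) - g x) * norm d" by (rule norm_cauchy_schwarz)
    also have "\<dots> \<le> L * norm (t *\<^sub>R d) * norm d"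
      using lp[of "x + t *\<^sub>R d" x] by (simp add: mult_right_mono)
    also have "\<dots> = L * t * (norm d)\<^sup>2" using t by (simp add: power2_eq_square)
    finally show "\<exists>y. DERIV \<psi> t :> y \<and> y \<le> 0" using D[of t] by force
  next
    show "continuous_on {0..1} \<psi>"
      using D by (meson DERIV_isCont continuous_at_imp_continuous_on)
  qed simp
  then show ?thesis by (simp add: \<psi>_def d_def)
qed

lemma cocoer_s:
  fixes h :: "'a::real_inner \<Rightarrow> real"
  assumes conv: "\<And>a b. h a + inner (dh a) (b - a) \<le> h b"
    and up: "\<And>a b. h b \<le> h a + inner (dh a) (b - a) + M / 2 * (norm (b - a))\<^sup>2"
    and s: "s \<ge> 0"
  shows "2 * s * (norm (dh x - dh y))\<^sup>2 - M * s\<^sup>2 * (norm (dh x - dh y))\<^sup>2 \<le> inner (dh x - dh y) (x - y)"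
proof -
  define G where "G = dh y - dh x"
  define z1 where "z1 = y - s *\<^sub>R G"
  define z2 where "z2 = x + s *\<^sub>R G"
  have 1: "h x + inner (dh x) (z1 - x) \<le> h y + inner (dh y) (z1 - y) + M / 2 * (norm (z1 - y))\<^sup>2"
    using conv[of x z1] up[where a=y and b=z1] by linarith
  have 2: "h y + inner (dh y) (z2 - y) \<le> h x + inner (dh x) (z2 - x) + M / 2 * (norm (z2 - x))\<^sup>2"
    using conv[of y z2] up[where a=x and b=z2] by linarith
  have e1: "inner (dh x) (z1 - x) = inner (dh x) (y - x) - s * inner (dh x) G"
    by (simp add: z1_def inner_diff_right algebra_simps)
  have e2: "inner (dh y) (z2 - y) = inner (dh y) (x - y) + s * inner (dh y) G"
    by (simp add: z2_def inner_diff_right inner_add_right algebra_simps)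
  have e3: "inner (dh y) (z1 - y) = - s * inner (dh y) G" by (simp add: z1_def)
  have e4: "inner (dh x) (z2 - x) = s * inner (dh x) G" by (simp add: z2_def)
  have e5: "(norm (z1 - y))\<^sup>2 = s\<^sup>2 * (norm G)\<^sup>2" by (simp add: z1_def power_mult_distrib)
  have e6: "(norm (z2 - x))\<^sup>2 = s\<^sup>2 * (norm G)\<^sup>2" by (simp add: z2_def power_mult_distrib)
  have e7: "inner (dh y) G - inner (dh x) G = (norm G)\<^sup>2"
    by (simp add: G_def power2_norm_eq_inner inner_diff_left)
  have e8: "inner (dh x) (y - x) + inner (dh y) (x - y) = - inner (dh x - dh y) (x - y)"
    by (simp add: inner_diff_left inner_diff_right algebra_simps)
  have e9: "norm (dh x - dh y) = norm G" by (simp add: G_def norm_minus_commute)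
  have "2 * s * (norm G)\<^sup>2 - M * s\<^sup>2 * (norm G)\<^sup>2 \<le> inner (dh x - dh y) (x - y)"
    using 1 2 e1 e2 e3 e4 e5 e6 e7 e8 by (simp add: algebra_simps)
  then show ?thesis by (simp add: e9)
qed

lemma real_aux:
  fixes M a P :: real
  assumes M: "M \<ge> 0" and a: "a \<ge> 0" and H: "\<And>s. s \<ge> 0 \<Longrightarrow> 2 * s * a - M * s\<^sup>2 * a \<le> P"
  shows "a \<le> M * P"
proof (cases "M = 0")
  case True
  show ?thesis
  proof (rule ccontr)
    assume "\<not> ?thesis" then have "a > 0" using True by simp
    have "2 * ((\<bar>P\<bar> + 1) / (2 * a)) * a = \<bar>P\<bar> + 1" using \<open>a > 0\<close> by simp
    then show False using H[of "(\<bar>P\<bar> + 1) / (2 * a)"] True \<open>a > 0\<close> by simp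
  qed
next
  case False
  then have Mp: "M > 0" using M by simp
  have "2 * (1 / M) * a - M * (1 / M)\<^sup>2 * a = a / M"
    using Mp by (simp add: power2_eq_square field_simps)
  then have "a / M \<le> P" using H[of "1 / M"] Mp by simp
  then show ?thesis using Mp by (simp add: field_simps)
qed

lemma gderiv_sq:
  fixes z :: "'a::real_inner"
  shows "GDERIV (\<lambda>z. c / 2 * (norm z)\<^sup>2) z :> c *\<^sub>R z"
  unfolding gderiv_def power2_norm_eq_inner
  by (auto intro!: derivative_eq_intros simp: inner_commute algebra_simps)


lemma aux_lin: "(nb::real) = na + 2 * i + nba \<Longrightarrow> m / 2 * nb = m / 2 * na + m * i + m / 2 * nba"
  by (simp add: algebra_simps)

lemma aux_lin2: "((L::real) - mu) / 2 * X = L / 2 * X - mu / 2 * X"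
  by (simp add: field_simps)

lemma norm_diff_sq:
  fixes a b :: "'a::real_inner"
  shows "(norm (a - b))\<^sup>2 = (norm a)\<^sup>2 - 2 * inner a b + (norm b)\<^sup>2"
  by (simp add: power2_norm_eq_inner inner_diff_left inner_diff_right inner_commute)

lemma key_contract:
  fixes f :: "'a::real_inner \<Rightarrow> real"
  assumes gr: "\<And>z. GDERIV f z :> g z"
    and sc: "strongly_convex mu f"
    and lip: "lipschitz_grad L g"
    and umin: "\<And>z. f u \<le> f z"
    and al: "0 < alpha" "alpha < 1 / L"
  shows "(norm (x - alpha *\<^sub>R g x - u))\<^sup>2 \<le> (1 - 2 * alpha * (mu * L / (mu + L))) * (norm (x - u))\<^sup>2"
proof -
  have mu: "mu > 0" and cv: "convex_on UNIV (\<lambda>x. f x - mu / 2 * (norm x)\<^sup>2)"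
    using sc by (auto simp: strongly_convex_def)
  have L: "L > 0" and lp: "\<And>a b. norm (g a - g b) \<le> L * norm (a - b)"
    using lip by (auto simp: lipschitz_grad_def)
  have desc: "\<And>a b. f b \<le> f a + inner (g a) (b - a) + L / 2 * (norm (b - a))\<^sup>2"
    using descent[OF gr lp] by blast
  have gu: "g u = 0"
  proof -
    have "f u \<le> f (u - (1 / L) *\<^sub>R g u)" by (rule umin)
    also have "\<dots> \<le> f u + inner (g u) (- ((1 / L) *\<^sub>R g u)) + L / 2 * (norm (- ((1 / L) *\<^sub>R g u)))\<^sup>2"
      using desc[where a=u and b="u - (1 / L) *\<^sub>R g u"] by simp
    also have "\<dots> = f u - (norm (g u))\<^sup>2 / (2 * L)"
      using L by (simp add: power_mult_distrib field_simps flip: power2_norm_eq_inner) (simp add: power2_eq_square)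
    finally have "(norm (g u))\<^sup>2 / (2 * L) \<le> 0" by simp
    then have "(norm (g u))\<^sup>2 \<le> 0" using L by (simp add: divide_le_0_iff)
    then show ?thesis by simp
  qed
  define h where "h = (\<lambda>x. f x - mu / 2 * (norm x)\<^sup>2)"
  define dh where "dh = (\<lambda>x. g x - mu *\<^sub>R x)"
  have gh: "GDERIV h z :> dh z" for z
    unfolding h_def dh_def by (rule GDERIV_diff[OF gr gderiv_sq])
  have conv: "\<And>a b. h a + inner (dh a) (b - a) \<le> h b"
    using convex_grad_ineq[OF cv[folded h_def] gh] by blast
  have up: "\<And>a b. h b \<le> h a + inner (dh a) (b - a) + (L - mu) / 2 * (norm (b - a))\<^sup>2"
  proof -
    fix a b :: 'a
    have n: "(norm b)\<^sup>2 = (norm a)\<^sup>2 + 2 * inner a (b - a) + (norm (b - a))\<^sup>2"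
      by (simp add: power2_norm_eq_inner inner_diff_left inner_diff_right inner_commute algebra_simps)
    have e: "inner (dh a) (b - a) = inner (g a) (b - a) - mu * inner a (b - a)"
      by (simp add: dh_def inner_diff_left)
    have n2: "mu / 2 * (norm b)\<^sup>2 = mu / 2 * (norm a)\<^sup>2 + mu * inner a (b - a) + mu / 2 * (norm (b - a))\<^sup>2"
      using n by (rule aux_lin)
    have n3: "(L - mu) / 2 * (norm (b - a))\<^sup>2 = L / 2 * (norm (b - a))\<^sup>2 - mu / 2 * (norm (b - a))\<^sup>2"
      by (rule aux_lin2)
    show "h b \<le> h a + inner (dh a) (b - a) + (L - mu) / 2 * (norm (b - a))\<^sup>2"
      using desc[where a=a and b=b] e n2 n3 unfolding h_def by linarith
  qed
  show ?thesis
  proof (cases "x = u")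
    case True then show ?thesis using gu by simp
  next
    case False
    define d where "d = x - u"
    have dnz: "norm d > 0" using False by (simp add: d_def)
    have dd: "dh x - dh u = g x - mu *\<^sub>R d" by (simp add: dh_def gu d_def algebra_simps)
    define c where "c = inner (g x) d"
    define Nd where "Nd = (norm d)\<^sup>2"
    define NG where "NG = (norm (g x))\<^sup>2"
    have Ndp: "Nd > 0" using dnz by (simp add: Nd_def)
    have NGp: "NG \<ge> 0" by (simp add: NG_def)
    have P: "inner (dh x - dh u) (x - u) = c - mu * Nd"
      by (simp add: dd c_def Nd_def d_def[symmetric] inner_diff_left power2_norm_eq_inner)
    have Q: "(norm (dh x - dh u))\<^sup>2 = NG - 2 * mu * c + mu\<^sup>2 * Nd"
      unfolding dd norm_diff_sq by (simp add: c_def Nd_def NG_def power_mult_distrib inner_commute)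
    have "0 \<le> inner (dh x - dh u) (x - u)"
      using cocoer_s[OF conv up, of 0 x u] by simp
    then have "mu * Nd \<le> c" using P by simp
    also have "c \<le> norm (g x) * norm d" unfolding c_def by (rule norm_cauchy_schwarz)
    also have "\<dots> \<le> L * Nd"
      using lp[of x u] gu dnz by (simp add: Nd_def d_def power2_eq_square mult_right_mono)
    finally have "mu \<le> L" using Ndp by simp
    have co: "NG - 2 * mu * c + mu\<^sup>2 * Nd \<le> (L - mu) * (c - mu * Nd)"
    proof -
      have "(norm (dh x - dh u))\<^sup>2 \<le> (L - mu) * inner (dh x - dh u) (x - u)"
        by (rule real_aux) (use cocoer_s[OF conv up, of _ x u] \<open>mu \<le> L\<close> in auto)
      then show ?thesis using P Q by simp
    qed
    then have co2: "NG + mu * L * Nd \<le> (L + mu) * c" by (simp add: algebra_simps power2_eq_square)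
    have lhs: "(norm (x - alpha *\<^sub>R g x - u))\<^sup>2 = Nd - 2 * alpha * c + alpha\<^sup>2 * NG"
    proof -
      have "x - alpha *\<^sub>R g x - u = d - alpha *\<^sub>R g x" by (simp add: d_def)
      then have "(norm (x - alpha *\<^sub>R g x - u))\<^sup>2 = (norm (d - alpha *\<^sub>R g x))\<^sup>2" by (simp add: d_def algebra_simps)
      also have "\<dots> = Nd - 2 * alpha * c + alpha\<^sup>2 * NG"
        unfolding norm_diff_sq by (simp add: c_def Nd_def NG_def power_mult_distrib inner_commute)
      finally show ?thesis .
    qed
    have aL: "alpha * L < 1" using al L by (simp add: field_simps)
    have aLm: "alpha * (L + mu) \<le> 2" using aL \<open>mu \<le> L\<close> al
      by (smt (verit) mult_left_mono distrib_left)
    have "(L + mu) * (Nd - 2 * alpha * c + alpha\<^sup>2 * NG)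
        = (L + mu) * Nd - 2 * alpha * ((L + mu) * c) + alpha * (alpha * (L + mu)) * NG"
      by (simp add: algebra_simps power2_eq_square)
    also have "\<dots> \<le> (L + mu) * Nd - 2 * alpha * (NG + mu * L * Nd) + alpha * 2 * NG"
    proof -
      have "2 * alpha * (NG + mu * L * Nd) \<le> 2 * alpha * ((L + mu) * c)"
        using co2 al by simp
      moreover have "alpha * (alpha * (L + mu)) * NG \<le> alpha * 2 * NG"
        using aLm al NGp by (simp add: mult_right_mono)
      ultimately show ?thesis by linarith
    qed
    also have "\<dots> = (L + mu) * ((1 - 2 * alpha * (mu * L / (mu + L))) * Nd)"
      using mu L by (simp add: field_simps)
    finally have "(L + mu) * (Nd - 2 * alpha * c + alpha\<^sup>2 * NG)
        \<le> (L + mu) * ((1 - 2 * alpha * (mu * L / (mu + L))) * Nd)" .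
    then have "Nd - 2 * alpha * c + alpha\<^sup>2 * NG \<le> (1 - 2 * alpha * (mu * L / (mu + L))) * Nd"
      using mu L by (smt (verit) mult_le_cancel_left_pos)
    then show ?thesis using lhs by (simp add: Nd_def d_def)
  qed
qed


lemma snorm_L2: "snorm x = L2_set (\<lambda>i. norm (x i)) UNIV"
  by (simp add: snorm_def L2_set_def)

lemma snorm_nonneg: "0 \<le> snorm x"
  by (simp add: snorm_L2)

lemma snorm_add: "snorm (\<lambda>i. a i + b i) \<le> snorm a + snorm b"
  unfolding snorm_L2
  by (rule order_trans[OF _ L2_set_triangle_ineq]) (simp add: L2_set_mono norm_triangle_ineq)

lemma snorm_diff: "snorm (\<lambda>i. a i - b i) \<le> snorm a + snorm b"
proof -
  have "snorm (\<lambda>i. a i - b i) = snorm (\<lambda>i. a i + (- b i))" by simp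
  also have "\<dots> \<le> snorm a + snorm (\<lambda>i. - b i)" by (rule snorm_add)
  also have "snorm (\<lambda>i. - b i) = snorm b" by (simp add: snorm_def)
  finally show ?thesis .
qed

lemma jensen_sq:
  fixes w a :: "'i \<Rightarrow> real"
  assumes "finite A" "\<And>j. j \<in> A \<Longrightarrow> w j \<ge> 0" "sum w A = 1"
  shows "(\<Sum>j\<in>A. w j * a j)\<^sup>2 \<le> (\<Sum>j\<in>A. w j * (a j)\<^sup>2)"
proof -
  define m where "m = (\<Sum>j\<in>A. w j * a j)"
  have "0 \<le> (\<Sum>j\<in>A. w j * (a j - m)\<^sup>2)" using assms by (simp add: sum_nonneg)
  also have "(\<Sum>j\<in>A. w j * (a j - m)\<^sup>2) = (\<Sum>j\<in>A. w j * (a j)\<^sup>2) - 2 * m * (\<Sum>j\<in>A. w j * a j) + m\<^sup>2 * sum w A"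
    by (simp add: power2_diff algebra_simps sum.distrib sum_subtractf sum_distrib_left sum_distrib_right)
  finally show ?thesis using assms(3) by (simp add: m_def power2_eq_square)
qed

lemma Zop_add: "Zop W (\<lambda>i. a i + b i) = (\<lambda>i. Zop W a i + Zop W b i)"
  by (simp add: Zop_def scaleR_add_right sum.distrib)

lemma Zpow_add: "Zpow W t (\<lambda>i. a i + b i) = (\<lambda>i. Zpow W t a i + Zpow W t b i)"
  by (induction t) (simp_all add: Zpow_def Zop_add)

lemma Zop_nonexp:
  assumes W: "mixing_matrix W"
  shows "snorm (Zop W x) \<le> snorm x"
proof -
  have nn: "\<And>i j. W $ i $ j \<ge> 0" and rs: "\<And>i. (\<Sum>j\<in>UNIV. W $ i $ j) = 1"
    and cs: "\<And>j. (\<Sum>i\<in>UNIV. W $ i $ j) = 1"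
    using W by (auto simp: mixing_matrix_def)
  have row: "(norm (Zop W x i))\<^sup>2 \<le> (\<Sum>j\<in>UNIV. W $ i $ j * (norm (x j))\<^sup>2)" for i
  proof -
    have "norm (Zop W x i) \<le> (\<Sum>j\<in>UNIV. W $ i $ j * norm (x j))"
      unfolding Zop_def
      by (rule order_trans[OF norm_sum], rule sum_mono) (simp add: abs_of_nonneg nn)
    then have "(norm (Zop W x i))\<^sup>2 \<le> (\<Sum>j\<in>UNIV. W $ i $ j * norm (x j))\<^sup>2"
      by (simp add: power_mono)
    also have "\<dots> \<le> (\<Sum>j\<in>UNIV. W $ i $ j * (norm (x j))\<^sup>2)"
      by (rule jensen_sq) (use nn rs in auto)
    finally show ?thesis .
  qed
  have "(\<Sum>i\<in>UNIV. (norm (Zop W x i))\<^sup>2) \<le> (\<Sum>i\<in>UNIV. \<Sum>j\<in>UNIV. W $ i $ j * (norm (x j))\<^sup>2)"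
    by (rule sum_mono) (rule row)
  also have "\<dots> = (\<Sum>j\<in>UNIV. \<Sum>i\<in>UNIV. W $ i $ j * (norm (x j))\<^sup>2)" by (rule sum.swap)
  also have "\<dots> = (\<Sum>j\<in>UNIV. (norm (x j))\<^sup>2)"
    by (simp add: cs flip: sum_distrib_right)
  finally show ?thesis unfolding snorm_def by simp
qed

lemma Zpow_nonexp:
  assumes W: "mixing_matrix W"
  shows "snorm (Zpow W t x) \<le> snorm x"
proof (induction t)
  case 0 then show ?case by (simp add: Zpow_def)
next
  case (Suc t)
  have "snorm (Zpow W (Suc t) x) = snorm (Zop W (Zpow W t x))" by (simp add: Zpow_def)
  also have "\<dots> \<le> snorm (Zpow W t x)" by (rule Zop_nonexp[OF W])
  finally show ?case using Suc by simp
qed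

lemma seq_bound:
  fixes e :: "nat \<Rightarrow> real"
  assumes r: "\<And>k. e (Suc k) \<le> c * (e k + 2 * U)" and c: "0 \<le> c" "c \<le> 1" and nu: "0 < nu"
    and cn: "c * nu \<le> 2 * (1 - c)" and U: "0 \<le> U" and e0: "0 \<le> e 0"
  shows "e k \<le> e 0 + 4 * U / nu"
proof (induction k)
  case 0 then show ?case using U nu by simp
next
  case (Suc k)
  define E where "E = e 0 + 4 * U / nu"
  have a: "c * (2 * U) \<le> (1 - c) * (4 * U / nu)"
  proof -
    have "c * nu * U \<le> 2 * (1 - c) * U" using cn U by (simp add: mult_right_mono)
    then show ?thesis using nu by (simp add: field_simps)
  qed
  have "e (Suc k) \<le> c * (e k + 2 * U)" by (rule r)
  also have "\<dots> \<le> c * (E + 2 * U)" using Suc c by (simp add: E_def mult_left_mono)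
  also have "\<dots> \<le> E"
  proof -
    have "c * e 0 \<le> e 0" using c e0 by (simp add: mult_left_le_one_le)
    moreover have "c * (E + 2 * U) = c * e 0 + c * (4 * U / nu) + c * (2 * U)"
      by (simp add: E_def algebra_simps)
    moreover have "(1 - c) * (4 * U / nu) = 4 * U / nu - c * (4 * U / nu)" by (simp add: algebra_simps diff_divide_distrib add_divide_distrib)
    ultimately show ?thesis using a unfolding E_def by linarith
  qed
  finally show ?case by (simp add: E_def)
qed


theorem lemma3:
  fixes W :: "real^'n^'n"
    and f :: "'n \<Rightarrow> 'a::euclidean_space \<Rightarrow> real"
    and g :: "'n \<Rightarrow> 'a \<Rightarrow> 'a"
    and mu Lc :: "'n \<Rightarrow> real"
    and u :: "'n \<Rightarrow> 'a"
    and alpha :: real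
    and s0 :: 'a
    and tk :: "nat \<Rightarrow> nat"
    and x y :: "nat \<Rightarrow> 'n \<Rightarrow> 'a"
  assumes W: "mixing_matrix W"
    and grad: "\<And>i z. GDERIV (f i) z :> g i z"
    and sc: "\<And>i. strongly_convex (mu i) (f i)"
    and lip: "\<And>i. lipschitz_grad (Lc i) (g i)"
    and umin: "\<And>i z. f i (u i) \<le> f i z"
    and alpha_pos: "0 < alpha"
    and alpha_lt: "alpha < 1 / (MAX i. Lc i)"
    and tk_pos: "\<And>k. tk k \<ge> 1"
    and y0: "y 0 = (\<lambda>i. s0)"
    and xk: "\<And>k. x k = Zpow W (tk k) (y k)"
    and yk: "\<And>k. y (Suc k) = (\<lambda>i. x k i - alpha *\<^sub>R g i (x k i))"
  shows "\<forall>k\<ge>1.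
     (let gamma = (MIN i. mu i * Lc i / (mu i + Lc i));
          nu = 2 * alpha * gamma;
          D = snorm (\<lambda>i. y 0 i - u i) + (nu + 4) / nu * snorm u
      in snorm (x k) \<le> D \<and> snorm (y k) \<le> D)"
proof -
  define gamma where "gamma = (MIN i. mu i * Lc i / (mu i + Lc i))"
  define nu where "nu = 2 * alpha * gamma"
  define U where "U = snorm u"
  define e where "e = (\<lambda>k. snorm (\<lambda>i. y k i - u i))"
  define c where "c = sqrt (max 0 (1 - nu))"
  have mup: "\<And>i. mu i > 0" using sc by (simp add: strongly_convex_def)
  have Lp: "\<And>i. Lc i > 0" using lip by (simp add: lipschitz_grad_def)
  have gpos: "\<And>i. mu i * Lc i / (mu i + Lc i) > 0" using mup Lp
    by (simp add: add_pos_pos)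
  have gam_le: "\<And>i. gamma \<le> mu i * Lc i / (mu i + Lc i)"
    unfolding gamma_def by (rule Min_le) auto
  have gam_pos: "gamma > 0"
  proof -
    have "gamma \<in> range (\<lambda>i. mu i * Lc i / (mu i + Lc i))"
      unfolding gamma_def by (rule Min_in) auto
    then show ?thesis using gpos by auto
  qed
  have nu_pos: "nu > 0" using alpha_pos gam_pos by (simp add: nu_def)
  have al_i: "alpha < 1 / Lc i" for i
  proof -
    have "Lc i \<le> (MAX i. Lc i)" by (rule Max_ge) auto
    then have "1 / (MAX i. Lc i) \<le> 1 / Lc i" using Lp[of i] by (simp add: frac_le)
    then show ?thesis using alpha_lt by simp
  qed
  have c0: "0 \<le> c" by (simp add: c_def)
  have c1: "c \<le> 1" using nu_pos by (simp add: c_def)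
  have csq: "c\<^sup>2 = max 0 (1 - nu)" by (simp add: c_def)
  have cn: "c * nu \<le> 2 * (1 - c)"
  proof (cases "nu \<ge> 1")
    case True then have "c = 0" by (simp add: c_def)
    then show ?thesis by simp
  next
    case False
    then have "c\<^sup>2 = 1 - nu" using csq by simp
    then have "nu = (1 - c) * (1 + c)" by (simp add: algebra_simps power2_eq_square)
    then have "c * nu = (1 - c) * (c * (1 + c))" by simp
    also have "\<dots> \<le> (1 - c) * 2"
    proof -
      have "c * (1 + c) \<le> 1 * 2" by (rule mult_mono) (use c0 c1 in auto)
      then show ?thesis using c1 by (intro mult_left_mono) auto
    qed
    finally show ?thesis by simp
  qed
  have U0: "0 \<le> U" by (simp add: U_def snorm_nonneg)
  have step: "e (Suc k) \<le> c * (e k + 2 * U)" for k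
  proof -
    have agent: "norm (y (Suc k) i - u i) \<le> c * norm (x k i - u i)" for i
    proof -
      have "(norm (y (Suc k) i - u i))\<^sup>2 \<le> (1 - 2 * alpha * (mu i * Lc i / (mu i + Lc i))) * (norm (x k i - u i))\<^sup>2"
        using key_contract[OF grad sc lip umin alpha_pos al_i, where x="x k i"] by (simp only: yk)
      also have "\<dots> \<le> (1 - nu) * (norm (x k i - u i))\<^sup>2"
      proof -
        have "2 * alpha * gamma \<le> 2 * alpha * (mu i * Lc i / (mu i + Lc i))"
          by (rule mult_left_mono) (use gam_le[of i] alpha_pos in auto)
        then have "1 - 2 * alpha * (mu i * Lc i / (mu i + Lc i)) \<le> 1 - nu" by (simp only: nu_def)
        then show ?thesis by (rule mult_right_mono) simp
      qed
      also have "\<dots> \<le> c\<^sup>2 * (norm (x k i - u i))\<^sup>2"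
        by (rule mult_right_mono) (use csq in auto)
      also have "\<dots> = (c * norm (x k i - u i))\<^sup>2" by (simp add: power_mult_distrib)
      finally show ?thesis by (rule power2_le_imp_le) (use c0 in auto)
    qed
    have "e (Suc k) \<le> L2_set (\<lambda>i. c * norm (x k i - u i)) UNIV"
      unfolding e_def snorm_L2 by (rule L2_set_mono) (use agent in auto)
    also have "\<dots> = c * snorm (\<lambda>i. x k i - u i)"
      using c0 by (simp add: snorm_L2 L2_set_right_distrib)
    also have "snorm (\<lambda>i. x k i - u i) \<le> e k + 2 * U"
    proof -
      have eq: "(\<lambda>i. x k i - u i) = (\<lambda>i. Zpow W (tk k) (\<lambda>i. y k i - u i) i + (Zpow W (tk k) u i - u i))"
      proof -
        have "Zpow W (tk k) (\<lambda>i. (y k i - u i) + u i) = (\<lambda>i. Zpow W (tk k) (\<lambda>i. y k i - u i) i + Zpow W (tk k) u i)"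
          by (rule Zpow_add)
        then have H: "\<And>i. Zpow W (tk k) (y k) i = Zpow W (tk k) (\<lambda>i. y k i - u i) i + Zpow W (tk k) u i"
          by (simp add: fun_eq_iff)
        show ?thesis
        proof (rule ext)
          fix i show "x k i - u i = Zpow W (tk k) (\<lambda>i. y k i - u i) i + (Zpow W (tk k) u i - u i)"
            unfolding xk H by (simp only: add_diff_eq)
        qed
      qed
      have "snorm (\<lambda>i. x k i - u i) \<le> snorm (Zpow W (tk k) (\<lambda>i. y k i - u i)) + snorm (\<lambda>i. Zpow W (tk k) u i - u i)"
        unfolding eq by (rule snorm_add)
      also have "\<dots> \<le> e k + (snorm (Zpow W (tk k) u) + U)"
        using Zpow_nonexp[OF W, of "tk k" "\<lambda>i. y k i - u i"] snorm_diff[of "Zpow W (tk k) u" u]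
        by (simp add: e_def U_def)
      also have "\<dots> \<le> e k + 2 * U"
        using Zpow_nonexp[OF W, of "tk k" u] by (simp add: U_def)
      finally show ?thesis .
    qed
    then have "c * snorm (\<lambda>i. x k i - u i) \<le> c * (e k + 2 * U)" by (rule mult_left_mono) (use c0 in auto)
    finally show ?thesis .
  qed
  have eb: "e k \<le> e 0 + 4 * U / nu" for k
    by (rule seq_bound[where e=e, OF step c0 c1 nu_pos cn U0]) (simp add: e_def snorm_nonneg)
  have yb: "snorm (y k) \<le> e 0 + (nu + 4) / nu * U" for k
  proof -
    have "snorm (y k) = snorm (\<lambda>i. (y k i - u i) + u i)" by simp
    also have "\<dots> \<le> e k + U" unfolding e_def U_def by (rule snorm_add)
    also have "\<dots> \<le> e 0 + 4 * U / nu + U" using eb[of k] by simp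
    also have "\<dots> = e 0 + (nu + 4) / nu * U" using nu_pos by (simp add: field_simps)
    finally show ?thesis .
  qed
  have xb: "snorm (x k) \<le> e 0 + (nu + 4) / nu * U" for k
    using Zpow_nonexp[OF W, of "tk k" "y k"] yb[of k] by (simp add: xk)
  show ?thesis
    using xb yb by (simp add: Let_def gamma_def[symmetric] nu_def[symmetric] e_def U_def)
qed

end
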